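(* Let $n,m$ be positive integers and $\sigma$ a composition of $m$ with $\ell(\sigma)$ parts. The maps $\Phi_\sigma:\Delta(\mathcal{T}_n,m)\to\Gamma(\mathsf{hypo}_{n+\ell(\sigma)-1},\sigma)$, $Q\mapsto\pi_\sigma(Q)$, and $\Gamma(\mathsf{hypo}_{n+\ell(\sigma)-1},\sigma)\to\Delta(\mathcal{T}_n,m)$, $T\mapsto\overline{T}$, are mutually inverse isomorphisms of unlabelled directed graphs.
   Context: A quasi-array of size $m$ is an array $Q$ with cells $(i,j)$, $1\le i\le m$, $1\le j\le m-i+1$, each containing a positive integer $Q_{(i,j)}$, with $Q_{(1,j)}\le Q_{(1,j+1)}$ and $Q_{(i,j)}=Q_{(1,i+j-1)}+i-1$. The $k$-th diagonal is the set of cells with $i+j-1=k$. For $Q$ of size $m$: $D_m$ is always defined and adds $1$ to every entry of the $m$-th diagonal; for $1\le k\le m-1$, $D_k$ is defined iff $Q_{(1,k)}<Q_{(1,k+1)}$, and then adds $1$ to every entry of the $k$-th diagonal. $\mathcal{T}_n$ is the set of quasi-arrays whose first-row rightmost entry is at most $n$. $\Delta(\mathcal{T}_n,m)$ is the directed graph whose vertices are the quasi-arrays of size $m$ in $\mathcal{T}_n$, with an edge $Q\to D_k(Q)$ labelled $k$ whenever $D_k$ is defined on $Q$ and $D_k(Q)\in\mathcal{T}_n$. A quasi-ribbon tableau of shape $\sigma=(\sigma_1,\dots,\sigma_r)$ is a filling with positive integers of the diagram having $\sigma_i$ cells in row $i$, the leftmost cell of row $i+1$ directly below the rightmost cell of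 row $i$, weakly increasing along rows and strictly increasing down columns; its column reading is read column by column left to right, each column bottom to top. Quasi-Kashiwara operator $f_i$ on a word $u$: undefined if $u$ contains a subsequence $(i+1)\,i$ or no letter $i$; otherwise replaces the rightmost $i$ by $i+1$. For $N\ge1$, $\Gamma(\mathsf{hypo}_N,\sigma)$ is the directed graph whose vertices are the quasi-ribbon tableaux of shape $\sigma$ with entries in $\{1,\dots,N\}$ (identified with column readings), with an edge $u\to f_i(u)$ labelled $i$ for $1\le i\le N-1$ whenever $f_i(u)$ is defined. $\pi_\sigma(Q)$ is the quasi-ribbon tableau formed by the cells of $Q$ making up a quasi-ribbon diagram of shape $\sigma$ with first cell $(1,1)$; for a quasi-ribbon tableau $T$ of shape $\sigma$ with $m$ cells, $\overline{T}$ is the unique quasi-array of size $m$ with $\pi_\sigma(\overline{T})=T$. *)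

theory Defs
  imports Main
begin

text \<open>Arrays and tableaux are functions from cells (row i, column j), 1-indexed,
  to positive integers, and are 0 outside their set of cells.\<close>

type_synonym array = "nat \<times> nat \<Rightarrow> nat"

definition qa_cells :: "nat \<Rightarrow> (nat \<times> nat) set" where
  "qa_cells m = {(i, j). 1 \<le> i \<and> i \<le> m \<and> 1 \<le> j \<and> j \<le> m - i + 1}"

definition is_quasi_array :: "nat \<Rightarrow> array \<Rightarrow> bool" where
  "is_quasi_array m Q \<longleftrightarrow>
     (\<forall>c. c \<notin> qa_cells m \<longrightarrow> Q c = 0) \<and>
     (\<forall>c \<in> qa_cells m. 0 < Q c) \<and>
     (\<forall>j. 1 \<le> j \<and> j < m \<longrightarrow> Q (1, j) \<le> Q (1, j + 1)) \<and>
     (\<forall>i j. (i, j) \<in> qa_cells m \<longrightarrow> Q (i, j) = Q (1, i + j - 1) + (i - 1))"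

definition qa_D :: "nat \<Rightarrow> nat \<Rightarrow> array \<Rightarrow> array" where
  "qa_D m k Q = (\<lambda>(i, j). if (i, j) \<in> qa_cells m \<and> i + j - 1 = k then Q (i, j) + 1 else Q (i, j))"

definition qa_D_defined :: "nat \<Rightarrow> nat \<Rightarrow> array \<Rightarrow> bool" where
  "qa_D_defined m k Q \<longleftrightarrow> k = m \<or> (1 \<le> k \<and> k < m \<and> Q (1, k) < Q (1, k + 1))"

definition Delta_V :: "nat \<Rightarrow> nat \<Rightarrow> array set" where
  "Delta_V n m = {Q. is_quasi_array m Q \<and> Q (1, m) \<le> n}"

definition Delta_E :: "nat \<Rightarrow> nat \<Rightarrow> (array \<times> array) set" where
  "Delta_E n m = {(Q, qa_D m k Q) | Q k. Q \<in> Delta_V n m \<and> 1 \<le> k \<and> k \<le> m \<and>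
       qa_D_defined m k Q \<and> qa_D m k Q \<in> Delta_V n m}"

text \<open>Row i (1-indexed) of the quasi-ribbon diagram of shape \<open>\<sigma>\<close> starts in column
  \<open>c_i\<close>, with \<open>c_1 = 1\<close> and \<open>c_{i+1} = c_i + \<sigma>_i - 1\<close>; its first cell is (1,1).\<close>
definition ribbon_start :: "nat list \<Rightarrow> nat \<Rightarrow> nat" where
  "ribbon_start \<sigma> i = 1 + sum_list (map (\<lambda>x. x - 1) (take (i - 1) \<sigma>))"

definition ribbon_cells :: "nat list \<Rightarrow> (nat \<times> nat) set" where
  "ribbon_cells \<sigma> = {(i, j). 1 \<le> i \<and> i \<le> length \<sigma> \<and>
       ribbon_start \<sigma> i \<le> j \<and> j < ribbon_start \<sigma> i + \<sigma> ! (i - 1)}"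

definition is_qrt :: "nat list \<Rightarrow> array \<Rightarrow> bool" where
  "is_qrt \<sigma> T \<longleftrightarrow>
     (\<forall>c. c \<notin> ribbon_cells \<sigma> \<longrightarrow> T c = 0) \<and>
     (\<forall>c \<in> ribbon_cells \<sigma>. 0 < T c) \<and>
     (\<forall>i j. (i, j) \<in> ribbon_cells \<sigma> \<and> (i, j + 1) \<in> ribbon_cells \<sigma> \<longrightarrow> T (i, j) \<le> T (i, j + 1)) \<and>
     (\<forall>i j. (i, j) \<in> ribbon_cells \<sigma> \<and> (i + 1, j) \<in> ribbon_cells \<sigma> \<longrightarrow> T (i, j) < T (i + 1, j))"

definition col_reading :: "nat list \<Rightarrow> array \<Rightarrow> nat list" where
  "col_reading \<sigma> T = concat (map (\<lambda>j. map (\<lambda>i. T (i, j))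
       (filter (\<lambda>i. (i, j) \<in> ribbon_cells \<sigma>) (rev [1..<length \<sigma> + 1])))
     [1..<sum_list \<sigma> + 1])"

definition qk_defined :: "nat \<Rightarrow> nat list \<Rightarrow> bool" where
  "qk_defined i u \<longleftrightarrow> i \<in> set u \<and>
     \<not> (\<exists>p q. p < q \<and> q < length u \<and> u ! p = i + 1 \<and> u ! q = i)"

definition qk_f :: "nat \<Rightarrow> nat list \<Rightarrow> nat list" where
  "qk_f i u = u[(GREATEST p. p < length u \<and> u ! p = i) := i + 1]"

definition Gamma_V :: "nat \<Rightarrow> nat list \<Rightarrow> array set" where
  "Gamma_V N \<sigma> = {T. is_qrt \<sigma> T \<and> (\<forall>c \<in> ribbon_cells \<sigma>. T c \<le> N)}"

definition Gamma_E :: "nat \<Rightarrow> nat list \<Rightarrow> (array \<times> array) set" where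
  "Gamma_E N \<sigma> = {(T, T') | T T'. T \<in> Gamma_V N \<sigma> \<and> T' \<in> Gamma_V N \<sigma> \<and>
       (\<exists>i. 1 \<le> i \<and> i \<le> N - 1 \<and> qk_defined i (col_reading \<sigma> T) \<and>
            col_reading \<sigma> T' = qk_f i (col_reading \<sigma> T))}"

definition pi_sigma :: "nat list \<Rightarrow> array \<Rightarrow> array" where
  "pi_sigma \<sigma> Q = (\<lambda>c. if c \<in> ribbon_cells \<sigma> then Q c else 0)"

definition qa_bar :: "nat \<Rightarrow> nat list \<Rightarrow> array \<Rightarrow> array" where
  "qa_bar m \<sigma> T = (THE Q. is_quasi_array m Q \<and> pi_sigma \<sigma> Q = T)"

end

theory Submission
  imports Defs
begin


lemma sum_minus_one: "\<forall>x\<in>set xs. 0 < (x::nat) \<Longrightarrow> sum_list (map (\<lambda>x. x - 1) xs) + length xs = sum_list xs"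
  by (induction xs) auto

locale rib =
  fixes \<sigma> :: "nat list"
  assumes pos: "\<forall>x\<in>set \<sigma>. 0 < x"
begin

definition S :: "nat \<Rightarrow> nat" where "S i = sum_list (take i \<sigma>)"

lemma S_Suc: "i < length \<sigma> \<Longrightarrow> S (Suc i) = S i + \<sigma> ! i"
  by (simp add: S_def take_Suc_conv_app_nth)

lemma S_0[simp]: "S 0 = 0" by (simp add: S_def)

lemma S_len: "S (length \<sigma>) = sum_list \<sigma>" by (simp add: S_def)

lemma S_strict: "i < j \<Longrightarrow> j \<le> length \<sigma> \<Longrightarrow> S i < S j"
proof (induction j)
  case 0 then show ?case by simp
next
  case (Suc j)
  have "\<sigma> ! j > 0" using pos Suc.prems by auto
  then show ?case using Suc S_Suc[of j] by (cases "i = j") auto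
qed

lemma S_mono: "i \<le> j \<Longrightarrow> j \<le> length \<sigma> \<Longrightarrow> S i \<le> S j"
  using S_strict by (cases "i = j") (auto intro: less_imp_le)

lemma S_ge: "i \<le> length \<sigma> \<Longrightarrow> i \<le> S i"
proof (induction i)
  case 0 then show ?case by simp
next
  case (Suc i)
  then show ?case using S_strict[of i "Suc i"] by auto
qed

lemma ribbon_start_eq: "1 \<le> i \<Longrightarrow> i \<le> length \<sigma> \<Longrightarrow> ribbon_start \<sigma> i + (i - 1) = 1 + S (i - 1)"
proof -
  assume a: "1 \<le> i" "i \<le> length \<sigma>"
  have "sum_list (map (\<lambda>x. x - 1) (take (i - 1) \<sigma>)) + length (take (i - 1) \<sigma>) = sum_list (take (i - 1) \<sigma>)"
    using pos by (intro sum_minus_one) (auto dest: in_set_takeD)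
  moreover have "length (take (i - 1) \<sigma>) = i - 1" using a by simp
  ultimately show ?thesis by (simp add: ribbon_start_def S_def)
qed

lemma nth_eq_S: "1 \<le> i \<Longrightarrow> i \<le> length \<sigma> \<Longrightarrow> \<sigma> ! (i - 1) + S (i - 1) = S i"
  using S_Suc[of "i - 1"] by simp

lemma ribbon_iff: "(i, j) \<in> ribbon_cells \<sigma> \<longleftrightarrow>
   1 \<le> i \<and> i \<le> length \<sigma> \<and> S (i - 1) < i + j - 1 \<and> i + j - 1 \<le> S i"
proof -
  have "(i, j) \<in> ribbon_cells \<sigma> \<longleftrightarrow> 1 \<le> i \<and> i \<le> length \<sigma> \<and>
       ribbon_start \<sigma> i \<le> j \<and> j < ribbon_start \<sigma> i + \<sigma> ! (i - 1)"
    by (simp add: ribbon_cells_def)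
  also have "\<dots> \<longleftrightarrow> 1 \<le> i \<and> i \<le> length \<sigma> \<and> S (i - 1) < i + j - 1 \<and> i + j - 1 \<le> S i"
  proof (cases "1 \<le> i \<and> i \<le> length \<sigma>")
    case True
    then have a: "ribbon_start \<sigma> i + (i - 1) = 1 + S (i - 1)" "\<sigma> ! (i - 1) + S (i - 1) = S i"
      "i - 1 \<le> S (i - 1)"
      using ribbon_start_eq nth_eq_S S_ge by auto
    show ?thesis using True a by (auto; linarith)
  qed auto
  finally show ?thesis .
qed

definition rw :: "nat \<Rightarrow> nat" where "rw d = (LEAST i. d \<le> S i)"

context
  fixes d assumes d: "1 \<le> d" "d \<le> sum_list \<sigma>"
begin
lemma rw_props: "1 \<le> rw d" "rw d \<le> length \<sigma>" "d \<le> S (rw d)" "S (rw d - 1) < d"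
proof -
  have ex: "d \<le> S (length \<sigma>)" using d S_len by simp
  show 3: "d \<le> S (rw d)" unfolding rw_def by (rule LeastI[of _ "length \<sigma>"]) (rule ex)
  show "rw d \<le> length \<sigma>" unfolding rw_def by (rule Least_le) (rule ex)
  show 1: "1 \<le> rw d" using 3 d by (cases "rw d") auto
  show "S (rw d - 1) < d"
    using not_less_Least[of "rw d - 1" "\<lambda>i. d \<le> S i"] 1 unfolding rw_def[symmetric] by simp
qed

lemma rw_unique: "1 \<le> i \<Longrightarrow> i \<le> length \<sigma> \<Longrightarrow> S (i - 1) < d \<Longrightarrow> d \<le> S i \<Longrightarrow> rw d = i"
proof -
  assume a: "1 \<le> i" "i \<le> length \<sigma>" "S (i - 1) < d" "d \<le> S i"
  note p = rw_props
  show ?thesis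
  proof (rule ccontr)
    assume "rw d \<noteq> i"
    then consider "rw d < i" | "i < rw d" by linarith
    then show False
    proof cases
      case 1 then have "S (rw d) \<le> S (i - 1)" using S_mono a by simp
      then show False using a p by simp
    next
      case 2 then have "S i \<le> S (rw d - 1)" using S_mono p by simp
      then show False using a p by simp
    qed
  qed
qed

lemma rw_le: "rw d \<le> d"
proof -
  have "rw d - 1 \<le> S (rw d - 1)" using S_ge rw_props(2) by simp
  then show ?thesis using rw_props by simp
qed
end

definition col :: "nat \<Rightarrow> nat" where "col d = d + 1 - rw d"
definition cell :: "nat \<Rightarrow> nat \<times> nat" where "cell d = (rw d, col d)"

lemma cell_in: "1 \<le> d \<Longrightarrow> d \<le> sum_list \<sigma> \<Longrightarrow> cell d \<in> ribbon_cells \<sigma>"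
  using rw_props[of d] rw_le[of d] unfolding cell_def col_def ribbon_iff by auto

lemma ribbon_cell: "(i, j) \<in> ribbon_cells \<sigma> \<Longrightarrow> 1 \<le> i + j - 1 \<and> i + j - 1 \<le> sum_list \<sigma> \<and> cell (i + j - 1) = (i, j)"
proof -
  assume a: "(i, j) \<in> ribbon_cells \<sigma>"
  then have b: "1 \<le> i" "i \<le> length \<sigma>" "S (i - 1) < i + j - 1" "i + j - 1 \<le> S i"
    by (auto simp: ribbon_iff)
  have "S i \<le> sum_list \<sigma>" using S_mono[of i "length \<sigma>"] b S_len by simp
  then have c: "1 \<le> i + j - 1" "i + j - 1 \<le> sum_list \<sigma>" using b by auto
  have "rw (i + j - 1) = i" using rw_unique[OF c] b by simp
  then show ?thesis using c b unfolding cell_def col_def by auto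
qed

lemma ribbon_eq: "ribbon_cells \<sigma> = cell ` {1..sum_list \<sigma>}"
  using cell_in ribbon_cell by (auto simp: image_iff) (metis atLeastAtMost_iff)

lemma cell_inj: "1 \<le> d \<Longrightarrow> d \<le> sum_list \<sigma> \<Longrightarrow> 1 \<le> e \<Longrightarrow> e \<le> sum_list \<sigma> \<Longrightarrow> cell d = cell e \<Longrightarrow> d = e"
  using rw_le[of d] rw_le[of e] by (auto simp: cell_def col_def)

abbreviation "M \<equiv> sum_list \<sigma>"

lemma rw_mono: "1 \<le> d \<Longrightarrow> d \<le> e \<Longrightarrow> e \<le> M \<Longrightarrow> rw d \<le> rw e"
  using rw_props[of e] unfolding rw_def[of d] by (intro Least_le) simp

lemma rw_step: "1 \<le> d \<Longrightarrow> d < M \<Longrightarrow> rw (d + 1) = rw d \<or> rw (d + 1) = rw d + 1"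
proof -
  assume a: "1 \<le> d" "d < M"
  note p = rw_props[of d]
  show ?thesis
  proof (cases "d + 1 \<le> S (rw d)")
    case True
    then have "rw (d + 1) \<le> rw d" unfolding rw_def[of "d+1"] by (intro Least_le)
    then show ?thesis using rw_mono[of d "d+1"] a by simp
  next
    case False
    then have e: "S (rw d) = d" using p a by simp
    have "rw d < length \<sigma>"
    proof (rule ccontr)
      assume "\<not> rw d < length \<sigma>"
      then have "rw d = length \<sigma>" using p a by simp
      then show False using e S_len a by simp
    qed
    then have "d + 1 \<le> S (rw d + 1)" using S_strict[of "rw d" "rw d + 1"] e by simp
    then have "rw (d + 1) = rw d + 1" using rw_unique[of "d+1" "rw d + 1"] a e \<open>rw d < length \<sigma>\<close> by simp
    then show ?thesis by simp
  qed
qed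

lemma rw_M: "1 \<le> M \<Longrightarrow> rw M = length \<sigma>"
proof -
  assume a: "1 \<le> M"
  then have "length \<sigma> \<ge> 1" by (cases \<sigma>) auto
  then show ?thesis using rw_unique[of M "length \<sigma>"] a S_strict[of "length \<sigma> - 1" "length \<sigma>"] S_len by simp
qed

lemma col_step: "1 \<le> d \<Longrightarrow> d < M \<Longrightarrow> col d \<le> col (d + 1)"
  using rw_step[of d] rw_le[of d] unfolding col_def by auto

lemma col_mono: "1 \<le> d \<Longrightarrow> d \<le> e \<Longrightarrow> e \<le> M \<Longrightarrow> col d \<le> col e"
proof (induction e)
  case 0 then show ?case by simp
next
  case (Suc e)
  show ?case
  proof (cases "d = Suc e")
    case False
    then have "col d \<le> col e" using Suc by simp
    also have "col e \<le> col (Suc e)" using col_step[of e] Suc False by simp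
    finally show ?thesis .
  qed simp
qed

lemma col_eq_step: "1 \<le> d \<Longrightarrow> d < e \<Longrightarrow> e \<le> M \<Longrightarrow> col d = col e \<Longrightarrow> rw (d + 1) = rw d + 1"
proof (rule ccontr)
  assume a: "1 \<le> d" "d < e" "e \<le> M" "col d = col e" "rw (d + 1) \<noteq> rw d + 1"
  then have "rw (d + 1) = rw d" using rw_step[of d] by simp
  then have "col (d + 1) = col d + 1" using rw_le[of d] a unfolding col_def by simp
  moreover have "col (d + 1) \<le> col e" using col_mono[of "d+1" e] a by simp
  ultimately show False using a by simp
qed

context
  fixes T assumes qrt: "is_qrt \<sigma> T"
begin

lemma t_step: "1 \<le> d \<Longrightarrow> d < M \<Longrightarrow> T (cell d) + (rw (d + 1) - rw d) \<le> T (cell (d + 1))"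
proof -
  assume a: "1 \<le> d" "d < M"
  have in1: "cell d \<in> ribbon_cells \<sigma>" "cell (d + 1) \<in> ribbon_cells \<sigma>" using cell_in a by auto
  from rw_step[OF a] show ?thesis
  proof
    assume r: "rw (d + 1) = rw d"
    then have "cell (d + 1) = (rw d, col d + 1)" using rw_le[of d] a unfolding cell_def col_def by simp
    then show ?thesis using qrt in1 r unfolding is_qrt_def cell_def by auto
  next
    assume r: "rw (d + 1) = rw d + 1"
    then have "cell (d + 1) = (rw d + 1, col d)" using rw_le[of d] a unfolding cell_def col_def by simp
    then show ?thesis using qrt in1 r unfolding is_qrt_def cell_def by fastforce
  qed
qed

lemma t_mono: "1 \<le> d \<Longrightarrow> d \<le> e \<Longrightarrow> e \<le> M \<Longrightarrow> T (cell d) \<le> T (cell e)"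
proof (induction e)
  case 0 then show ?case by simp
next
  case (Suc e)
  show ?case
  proof (cases "d = Suc e")
    case False
    then have "T (cell d) \<le> T (cell e)" using Suc by simp
    also have "\<dots> \<le> T (cell (Suc e))" using t_step[of e] Suc False by simp
    finally show ?thesis .
  qed simp
qed

lemma t_ge_rw: "1 \<le> d \<Longrightarrow> d \<le> M \<Longrightarrow> rw d \<le> T (cell d)"
proof (induction d)
  case 0 then show ?case by simp
next
  case (Suc d)
  show ?case
  proof (cases "d = 0")
    case True
    then have "0 < T (cell (Suc d))" using qrt cell_in[of "Suc d"] Suc unfolding is_qrt_def by auto
    then show ?thesis using rw_le[of 1] True Suc by simp
  next
    case False
    then show ?thesis using Suc t_step[of d] rw_step[of d] by auto
  qed
qed

lemma t_col: "1 \<le> d \<Longrightarrow> d < e \<Longrightarrow> e \<le> M \<Longrightarrow> col d = col e \<Longrightarrow> T (cell d) < T (cell e)"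
proof -
  assume a: "1 \<le> d" "d < e" "e \<le> M" "col d = col e"
  then have "rw (d + 1) = rw d + 1" by (rule col_eq_step)
  then have "T (cell d) < T (cell (d + 1))" using t_step[of d] a by simp
  also have "\<dots> \<le> T (cell e)" using t_mono[of "d+1" e] a by simp
  finally show ?thesis .
qed

end

end



lemma qaD:
  assumes "is_quasi_array m Q"
  shows "\<And>c. c \<notin> qa_cells m \<Longrightarrow> Q c = 0" "\<And>c. c \<in> qa_cells m \<Longrightarrow> 0 < Q c"
    "\<And>j. 1 \<le> j \<Longrightarrow> j < m \<Longrightarrow> Q (1, j) \<le> Q (1, j + 1)"
    "\<And>i j. (i, j) \<in> qa_cells m \<Longrightarrow> Q (i, j) = Q (1, i + j - 1) + (i - 1)"
  using assms unfolding is_quasi_array_def by blast+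

definition arr :: "nat \<Rightarrow> (nat \<Rightarrow> nat) \<Rightarrow> array" where
  "arr m q = (\<lambda>(i, j). if (i, j) \<in> qa_cells m then q (i + j - 1) + (i - 1) else 0)"

lemma qa_arr: "is_quasi_array m Q \<Longrightarrow> Q = arr m (\<lambda>k. Q (1, k))"
proof (rule ext)
  fix c :: "nat \<times> nat" assume a: "is_quasi_array m Q"
  obtain i j where c: "c = (i, j)" by fastforce
  show "Q c = arr m (\<lambda>k. Q (1, k)) c"
  proof (cases "(i, j) \<in> qa_cells m")
    case True
    then have "Q (i, j) = Q (1, i + j - 1) + (i - 1)" using a unfolding is_quasi_array_def by blast
    then show ?thesis using True c by (simp add: arr_def)
  next
    case False
    then show ?thesis using a c unfolding is_quasi_array_def arr_def by simp
  qed
qed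

lemma arr_1: "1 \<le> k \<Longrightarrow> k \<le> m \<Longrightarrow> arr m q (1, k) = q k"
  by (simp add: arr_def qa_cells_def)

lemma arr_qa:
  assumes "\<And>k. 1 \<le> k \<Longrightarrow> k \<le> m \<Longrightarrow> 0 < q k" "\<And>k. 1 \<le> k \<Longrightarrow> k < m \<Longrightarrow> q k \<le> q (k + 1)"
  shows "is_quasi_array m (arr m q)"
  unfolding is_quasi_array_def
proof (intro conjI allI ballI impI)
  fix c assume "c \<in> qa_cells m"
  then obtain i j where c: "c = (i, j)" "1 \<le> i" "i \<le> m" "1 \<le> j" "j \<le> m - i + 1"
    by (auto simp: qa_cells_def)
  then have "0 < q (i + j - 1)" using assms(1)[of "i + j - 1"] by simp
  then show "0 < arr m q c" using c \<open>c \<in> qa_cells m\<close> by (simp add: arr_def)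
next
  fix j assume "1 \<le> j \<and> j < m" then show "arr m q (1, j) \<le> arr m q (1, j + 1)"
    using assms(2)[of j] arr_1[of j m q] arr_1[of "j+1" m q] by simp
next
  fix i j assume "(i, j) \<in> qa_cells m" then show "arr m q (i, j) = arr m q (1, i + j - 1) + (i - 1)"
    by (simp add: arr_def qa_cells_def) linarith
qed (auto simp: arr_def)

lemma qa_mono: "is_quasi_array m Q \<Longrightarrow> 1 \<le> a \<Longrightarrow> a \<le> b \<Longrightarrow> b \<le> m \<Longrightarrow> Q (1, a) \<le> Q (1, b)"
proof (induction b)
  case 0 then show ?case by simp
next
  case (Suc b)
  show ?case
  proof (cases "a = Suc b")
    case False
    then have "Q (1, a) \<le> Q (1, b)" using Suc by simp
    also have "\<dots> \<le> Q (1, Suc b)" using Suc False qaD(3)[of m Q b] by simp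
    finally show ?thesis .
  qed simp
qed

lemma qa_D_arr: "qa_D m k (arr m q) = arr m (q(k := q k + 1))"
  by (auto simp: qa_D_def arr_def fun_eq_iff)

lemma qa_pos1: "is_quasi_array m Q \<Longrightarrow> 1 \<le> k \<Longrightarrow> k \<le> m \<Longrightarrow> 0 < Q (1, k)"
  using qaD(2)[of m Q "(1,k)"] unfolding qa_cells_def by auto

context rib begin

lemma cell_qa: "1 \<le> d \<Longrightarrow> d \<le> M \<Longrightarrow> cell d \<in> qa_cells M"
  using rw_props[of d] rw_le[of d] S_ge[of "length \<sigma>"] S_len
  unfolding cell_def col_def qa_cells_def by auto

lemma ribbon_qa: "ribbon_cells \<sigma> \<subseteq> qa_cells M"
  using cell_qa ribbon_eq by auto

lemma arr_cell: "1 \<le> d \<Longrightarrow> d \<le> M \<Longrightarrow> arr M q (cell d) = q d + (rw d - 1)"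
  using cell_qa[of d] rw_le[of d] unfolding arr_def cell_def col_def by auto

lemma qa_cell: "is_quasi_array M Q \<Longrightarrow> 1 \<le> d \<Longrightarrow> d \<le> M \<Longrightarrow> Q (cell d) = Q (1, d) + (rw d - 1)"
  using arr_cell[of d "\<lambda>k. Q (1, k)"] qa_arr[of M Q] by simp

lemma pi_cell: "1 \<le> d \<Longrightarrow> d \<le> M \<Longrightarrow> pi_sigma \<sigma> Q (cell d) = Q (cell d)"
  using cell_in unfolding pi_sigma_def by simp

lemma qa_unique:
  assumes "is_quasi_array M Q" "is_quasi_array M Q'" "pi_sigma \<sigma> Q = pi_sigma \<sigma> Q'"
  shows "Q = Q'"
proof -
  have "Q (1, k) = Q' (1, k)" if "1 \<le> k" "k \<le> M" for k
    using qa_cell[OF assms(1) that] qa_cell[OF assms(2) that] pi_cell[OF that, of Q] pi_cell[OF that, of Q'] assms(3)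
    by simp
  then have "arr M (\<lambda>k. Q (1, k)) = arr M (\<lambda>k. Q' (1, k))"
    by (auto simp: arr_def qa_cells_def fun_eq_iff)
  then show ?thesis using qa_arr assms by metis
qed

end



definition cs :: "nat list \<Rightarrow> (nat \<times> nat) list" where
  "cs \<sigma> = concat (map (\<lambda>j. map (\<lambda>i. (i, j))
       (filter (\<lambda>i. (i, j) \<in> ribbon_cells \<sigma>) (rev [1..<length \<sigma> + 1])))
     [1..<sum_list \<sigma> + 1])"

lemma col_reading_cs: "col_reading \<sigma> T = map T (cs \<sigma>)"
  by (simp add: col_reading_def cs_def map_concat comp_def)

definition R :: "nat \<times> nat \<Rightarrow> nat \<times> nat \<Rightarrow> bool" where
  "R a b \<longleftrightarrow> snd a < snd b \<or> (snd a = snd b \<and> fst b < fst a)"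

lemma sorted_blocks:
  assumes "sorted_wrt (<) js" "sorted_wrt (<) (xs :: nat list)"
  shows "sorted_wrt R (concat (map (\<lambda>j. map (\<lambda>i. (i, j)) (filter (P j) (rev xs))) js))"
  using assms(1)
proof (induction js)
  case Nil then show ?case by simp
next
  case (Cons j js)
  have "sorted_wrt (\<lambda>x y. y < x) (rev xs)" using assms(2) by (simp add: sorted_wrt_rev)
  then have "sorted_wrt (\<lambda>x y. y < x) (filter (P j) (rev xs))" by (rule sorted_wrt_filter)
  then have a: "sorted_wrt R (map (\<lambda>i. (i, j)) (filter (P j) (rev xs)))"
    by (simp add: sorted_wrt_map R_def)
  have cross: "\<forall>x\<in>set (map (\<lambda>i. (i, j)) (filter (P j) (rev xs))).
     \<forall>y\<in>set (concat (map (\<lambda>j. map (\<lambda>i. (i, j)) (filter (P j) (rev xs))) js)). R x y"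
    using Cons.prems by (auto simp: R_def)
  have "sorted_wrt R (concat (map (\<lambda>j. map (\<lambda>i. (i, j)) (filter (P j) (rev xs))) js))"
    using Cons by simp
  then show ?case using a cross by (simp add: sorted_wrt_append)
qed

lemma sorted_cs: "sorted_wrt R (cs \<sigma>)"
  unfolding cs_def by (rule sorted_blocks) (simp only: sorted_wrt_upt)+

lemma sorted_distinct: "sorted_wrt R xs \<Longrightarrow> distinct xs"
  by (induction xs) (auto simp: R_def)

lemma distinct_cs: "distinct (cs \<sigma>)"
  using sorted_cs sorted_distinct by blast

lemma R_total: "a \<noteq> b \<Longrightarrow> R a b \<or> R b a"
  by (cases a, cases b) (auto simp: R_def)

lemma R_asym: "R a b \<Longrightarrow> \<not> R b a"
  by (auto simp: R_def)

lemma pos_less: "p < length (cs \<sigma>) \<Longrightarrow> p' < length (cs \<sigma>) \<Longrightarrow> p < p' \<longleftrightarrow> R (cs \<sigma> ! p) (cs \<sigma> ! p')"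
proof -
  assume a: "p < length (cs \<sigma>)" "p' < length (cs \<sigma>)"
  have s: "\<And>i j. i < j \<Longrightarrow> j < length (cs \<sigma>) \<Longrightarrow> R (cs \<sigma> ! i) (cs \<sigma> ! j)"
    using sorted_cs[of \<sigma>] unfolding sorted_wrt_iff_nth_less by blast
  show ?thesis
  proof
    assume "p < p'" then show "R (cs \<sigma> ! p) (cs \<sigma> ! p')" using s a by blast
  next
    assume r: "R (cs \<sigma> ! p) (cs \<sigma> ! p')"
    show "p < p'"
    proof (rule ccontr)
      assume "\<not> p < p'"
      then consider "p = p'" | "p' < p" by linarith
      then show False
      proof cases
        case 1 then show False using r by (simp add: R_def)
      next
        case 2 then show False using s[of p' p] a r R_asym by blast
      qed
    qed
  qed
qed

lemma map_upd_distinct: "distinct xs \<Longrightarrow> p < length xs \<Longrightarrow> map (T(xs ! p := v)) xs = (map T xs)[p := v]"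
  by (rule nth_equalityI) (auto simp: nth_eq_iff_index_eq)

lemma map_inj_zero: "map T xs = map T' xs \<Longrightarrow> (\<And>c. c \<notin> set xs \<Longrightarrow> T c = 0) \<Longrightarrow> (\<And>c. c \<notin> set xs \<Longrightarrow> T' c = 0) \<Longrightarrow> T = T'"
  by (auto simp: fun_eq_iff map_eq_conv)

lemma ex_map_pair: "(\<exists>p q. p < q \<and> q < length (map T xs) \<and> map T xs ! p = a \<and> map T xs ! q = b) \<longleftrightarrow>
  (\<exists>p q. p < q \<and> q < length xs \<and> T (xs ! p) = a \<and> T (xs ! q) = b)"
proof
  assume "\<exists>p q. p < q \<and> q < length (map T xs) \<and> map T xs ! p = a \<and> map T xs ! q = b"
  then obtain p q where "p < q" "q < length (map T xs)" "map T xs ! p = a" "map T xs ! q = b" by blast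
  then show "\<exists>p q. p < q \<and> q < length xs \<and> T (xs ! p) = a \<and> T (xs ! q) = b"
    by (intro exI[of _ p] exI[of _ q]) auto
next
  assume "\<exists>p q. p < q \<and> q < length xs \<and> T (xs ! p) = a \<and> T (xs ! q) = b"
  then obtain p q where "p < q" "q < length xs" "T (xs ! p) = a" "T (xs ! q) = b" by blast
  then show "\<exists>p q. p < q \<and> q < length (map T xs) \<and> map T xs ! p = a \<and> map T xs ! q = b"
    by (intro exI[of _ p] exI[of _ q]) auto
qed

context rib begin

lemma set_cs: "set (cs \<sigma>) = ribbon_cells \<sigma>"
proof -
  have bnd: "(i, j) \<in> ribbon_cells \<sigma> \<Longrightarrow> 1 \<le> i \<and> i \<le> length \<sigma> \<and> 1 \<le> j \<and> j \<le> M" for i j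
    using ribbon_qa ribbon_iff[of i j] by (auto simp: qa_cells_def)
  have e: "set (cs \<sigma>) = (\<Union>j\<in>set [1..<M+1]. (\<lambda>i. (i, j)) ` set (filter (\<lambda>i. (i, j) \<in> ribbon_cells \<sigma>) (rev [1..<length \<sigma>+1])))"
    unfolding cs_def set_concat set_map image_image ..
  show ?thesis
  proof
    show "set (cs \<sigma>) \<subseteq> ribbon_cells \<sigma>" unfolding e by auto
  next
    show "ribbon_cells \<sigma> \<subseteq> set (cs \<sigma>)"
    proof
      fix c assume c: "c \<in> ribbon_cells \<sigma>"
      obtain a b where ab: "c = (a, b)" by fastforce
      have "1 \<le> a \<and> a \<le> length \<sigma> \<and> 1 \<le> b \<and> b \<le> M" using bnd c ab by blast
      then have "a \<in> set (filter (\<lambda>i. (i, b) \<in> ribbon_cells \<sigma>) (rev [1..<length \<sigma>+1]))"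
        using c ab by (simp del: upt_Suc)
      then have "c \<in> (\<lambda>i. (i, b)) ` set (filter (\<lambda>i. (i, b) \<in> ribbon_cells \<sigma>) (rev [1..<length \<sigma>+1]))"
        using ab by blast
      moreover have "b \<in> set [1..<M+1]" using \<open>1 \<le> a \<and> a \<le> length \<sigma> \<and> 1 \<le> b \<and> b \<le> M\<close> by (simp del: upt_Suc)
      ultimately show "c \<in> set (cs \<sigma>)" unfolding e by blast
    qed
  qed
qed

lemma cs_nth_cell: "p < length (cs \<sigma>) \<Longrightarrow> \<exists>d. 1 \<le> d \<and> d \<le> M \<and> cs \<sigma> ! p = cell d"
proof -
  assume "p < length (cs \<sigma>)"
  then have "cs \<sigma> ! p \<in> cell ` {1..M}" using nth_mem[of p "cs \<sigma>"] set_cs ribbon_eq by simp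
  then show ?thesis by force
qed

lemma cell_idx: "1 \<le> d \<Longrightarrow> d \<le> M \<Longrightarrow> \<exists>p. p < length (cs \<sigma>) \<and> cs \<sigma> ! p = cell d"
proof -
  assume "1 \<le> d" "d \<le> M"
  then have "cell d \<in> set (cs \<sigma>)" using cell_in[of d] set_cs by simp
  then show ?thesis unfolding in_set_conv_nth by blast
qed

lemma R_cell: "R (cell e) (cell d) \<longleftrightarrow> col e < col d \<or> (col e = col d \<and> rw d < rw e)"
  by (simp add: R_def cell_def)

context
  fixes T assumes qrt: "is_qrt \<sigma> T"
begin

lemma badpair:
  "(\<exists>p q. p < q \<and> q < length (cs \<sigma>) \<and> T (cs \<sigma> ! p) = i + 1 \<and> T (cs \<sigma> ! q) = i) \<longleftrightarrow>
   (\<exists>d. 1 \<le> d \<and> d < M \<and> rw (d + 1) = rw d + 1 \<and> T (cell d) = i \<and> T (cell (d + 1)) = i + 1)"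
proof
  assume "\<exists>p q. p < q \<and> q < length (cs \<sigma>) \<and> T (cs \<sigma> ! p) = i + 1 \<and> T (cs \<sigma> ! q) = i"
  then obtain p q where pq: "p < q" "q < length (cs \<sigma>)" "T (cs \<sigma> ! p) = i + 1" "T (cs \<sigma> ! q) = i"
    by blast
  obtain e where e: "1 \<le> e" "e \<le> M" "cs \<sigma> ! p = cell e" using cs_nth_cell[of p] pq by auto
  obtain d where d: "1 \<le> d" "d \<le> M" "cs \<sigma> ! q = cell d" using cs_nth_cell[of q] pq by auto
  have r: "R (cell e) (cell d)" using pos_less[of p \<sigma> q] pq e d by simp
  have de: "d < e"
  proof (rule ccontr)
    assume "\<not> d < e"
    then have "T (cell e) \<le> T (cell d)" using t_mono[OF qrt, of e d] e d by simp
    then show False using pq e d by simp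
  qed
  have "col d \<le> col e" using col_mono[of d e] d e de by simp
  then have ce: "col d = col e" using r R_cell by auto
  have rw1: "rw (d + 1) = rw d + 1" using col_eq_step[of d e] d e de ce by simp
  have "T (cell d) < T (cell (d + 1))" using t_step[OF qrt, of d] d e de rw1 by simp
  moreover have "T (cell (d + 1)) \<le> T (cell e)" using t_mono[OF qrt, of "d+1" e] d e de by simp
  ultimately show "\<exists>d. 1 \<le> d \<and> d < M \<and> rw (d + 1) = rw d + 1 \<and> T (cell d) = i \<and> T (cell (d + 1)) = i + 1"
    using pq d e de rw1 by (intro exI[of _ d]) auto
next
  assume "\<exists>d. 1 \<le> d \<and> d < M \<and> rw (d + 1) = rw d + 1 \<and> T (cell d) = i \<and> T (cell (d + 1)) = i + 1"
  then obtain d where d: "1 \<le> d" "d < M" "rw (d + 1) = rw d + 1" "T (cell d) = i" "T (cell (d + 1)) = i + 1"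
    by blast
  obtain p where p: "p < length (cs \<sigma>)" "cs \<sigma> ! p = cell (d + 1)" using cell_idx[of "d+1"] d by auto
  obtain q where q: "q < length (cs \<sigma>)" "cs \<sigma> ! q = cell d" using cell_idx[of d] d by auto
  have "col (d + 1) = col d" using d rw_le[of d] unfolding col_def by simp
  then have "R (cell (d + 1)) (cell d)" using R_cell d by simp
  then have "p < q" using pos_less[of p \<sigma> q] p q by simp
  then show "\<exists>p q. p < q \<and> q < length (cs \<sigma>) \<and> T (cs \<sigma> ! p) = i + 1 \<and> T (cs \<sigma> ! q) = i"
    using p q d by (intro exI[of _ p] exI[of _ q]) simp
qed

lemma greatest_pos:
  assumes k: "1 \<le> k" "k \<le> M" "T (cell k) = i" and last: "\<And>x. 1 \<le> x \<Longrightarrow> x \<le> M \<Longrightarrow> T (cell x) = i \<Longrightarrow> x \<le> k"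
    and p0: "p0 < length (cs \<sigma>)" "cs \<sigma> ! p0 = cell k"
  shows "(GREATEST p. p < length (map T (cs \<sigma>)) \<and> map T (cs \<sigma>) ! p = i) = p0"
proof (rule Greatest_equality)
  show "p0 < length (map T (cs \<sigma>)) \<and> map T (cs \<sigma>) ! p0 = i" using p0 k by simp
next
  fix y assume y: "y < length (map T (cs \<sigma>)) \<and> map T (cs \<sigma>) ! y = i"
  obtain d where d: "1 \<le> d" "d \<le> M" "cs \<sigma> ! y = cell d" using cs_nth_cell[of y] y by auto
  have yl: "y < length (cs \<sigma>)" using y by simp
  have "map T (cs \<sigma>) ! y = T (cs \<sigma> ! y)" using nth_map[OF yl] .
  then have td: "T (cell d) = i" using y d by simp
  have dk: "d \<le> k" using last[OF d(1,2) td] .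
  show "y \<le> p0"
  proof (rule ccontr)
    assume "\<not> y \<le> p0"
    then have r: "R (cell k) (cell d)" using pos_less[of p0 \<sigma> y] p0 y d by simp
    show False
    proof (cases "d = k")
      case True
      then show False using r by (simp add: R_def)
    next
      case False
      then have dk': "d < k" using dk by simp
      have "col d \<le> col k" using col_mono[of d k] d k dk by simp
      then have "col d = col k" using r R_cell by auto
      then have "T (cell d) < T (cell k)" using t_col[OF qrt, of d k] d k dk' by simp
      then show False using td k by simp
    qed
  qed
qed

end

lemma Gamma_E_iff:
  assumes T: "T \<in> Gamma_V N \<sigma>" and T': "T' \<in> Gamma_V N \<sigma>"
  shows "(T, T') \<in> Gamma_E N \<sigma> \<longleftrightarrow>
    (\<exists>i k. 1 \<le> i \<and> i \<le> N - 1 \<and> 1 \<le> k \<and> k \<le> M \<and> T (cell k) = i \<and>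
       (\<forall>x. 1 \<le> x \<and> x \<le> M \<and> T (cell x) = i \<longrightarrow> x \<le> k) \<and>
       \<not> (\<exists>d. 1 \<le> d \<and> d < M \<and> rw (d + 1) = rw d + 1 \<and> T (cell d) = i \<and> T (cell (d + 1)) = i + 1) \<and>
       T' = T(cell k := i + 1))"
proof -
  have qrt: "is_qrt \<sigma> T" using T by (simp add: Gamma_V_def)
  have z: "\<And>c. c \<notin> set (cs \<sigma>) \<Longrightarrow> T c = 0" using qrt set_cs unfolding is_qrt_def by auto
  have z': "\<And>c. c \<notin> set (cs \<sigma>) \<Longrightarrow> T' c = 0" using T' set_cs unfolding Gamma_V_def is_qrt_def by auto
  have key: "col_reading \<sigma> T' = qk_f i (col_reading \<sigma> T) \<longleftrightarrow> T' = T(cell k := i + 1)"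
    if k: "1 \<le> k" "k \<le> M" "T (cell k) = i" and last: "\<And>x. 1 \<le> x \<Longrightarrow> x \<le> M \<Longrightarrow> T (cell x) = i \<Longrightarrow> x \<le> k"
    for i k
  proof -
    obtain p0 where p0: "p0 < length (cs \<sigma>)" "cs \<sigma> ! p0 = cell k" using cell_idx[of k] k by auto
    have g: "(GREATEST p. p < length (map T (cs \<sigma>)) \<and> map T (cs \<sigma>) ! p = i) = p0"
      using greatest_pos[OF qrt k last p0] by blast
    have "qk_f i (col_reading \<sigma> T) = map (T(cell k := i + 1)) (cs \<sigma>)"
      unfolding qk_f_def col_reading_cs g using map_upd_distinct[OF distinct_cs p0(1), of T "i+1"] p0 by simp
    moreover have zz: "\<And>c. c \<notin> set (cs \<sigma>) \<Longrightarrow> (T(cell k := i + 1)) c = 0"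
      using z cell_in[of k] set_cs k by auto
    ultimately show ?thesis using map_inj_zero[of T' "cs \<sigma>" "T(cell k := i+1)", OF _ z' zz]
      by (auto simp: col_reading_cs)
  qed
  show ?thesis
  proof
    assume "(T, T') \<in> Gamma_E N \<sigma>"
    then obtain i where i: "1 \<le> i" "i \<le> N - 1" "qk_defined i (col_reading \<sigma> T)"
      "col_reading \<sigma> T' = qk_f i (col_reading \<sigma> T)"
      unfolding Gamma_E_def by blast
    have "i \<in> set (map T (cs \<sigma>))" using i(3) by (simp add: qk_defined_def col_reading_cs)
    then obtain d0 where d0: "1 \<le> d0" "d0 \<le> M" "T (cell d0) = i"
      using set_cs ribbon_eq by auto
    define k where "k = (GREATEST x. x \<le> M \<and> 1 \<le> x \<and> T (cell x) = i)"
    have kp: "k \<le> M \<and> 1 \<le> k \<and> T (cell k) = i" unfolding k_def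
      by (rule GreatestI_nat[of _ d0 M]) (use d0 in auto)
    have last: "x \<le> k" if "1 \<le> x" "x \<le> M" "T (cell x) = i" for x
      unfolding k_def by (rule Greatest_le_nat[of _ x M]) (use that in auto)
    have nb: "\<not> (\<exists>d. 1 \<le> d \<and> d < M \<and> rw (d + 1) = rw d + 1 \<and> T (cell d) = i \<and> T (cell (d + 1)) = i + 1)"
      using i(3) badpair[OF qrt, of i] ex_map_pair[of T "cs \<sigma>" "i+1" i]
      unfolding qk_defined_def col_reading_cs by blast
    have "T' = T(cell k := i + 1)" using key[of k i] kp last i(4) by blast
    then show "\<exists>i k. 1 \<le> i \<and> i \<le> N - 1 \<and> 1 \<le> k \<and> k \<le> M \<and> T (cell k) = i \<and>
       (\<forall>x. 1 \<le> x \<and> x \<le> M \<and> T (cell x) = i \<longrightarrow> x \<le> k) \<and>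
       \<not> (\<exists>d. 1 \<le> d \<and> d < M \<and> rw (d + 1) = rw d + 1 \<and> T (cell d) = i \<and> T (cell (d + 1)) = i + 1) \<and>
       T' = T(cell k := i + 1)"
      using i kp last nb by blast
  next
    assume "\<exists>i k. 1 \<le> i \<and> i \<le> N - 1 \<and> 1 \<le> k \<and> k \<le> M \<and> T (cell k) = i \<and>
       (\<forall>x. 1 \<le> x \<and> x \<le> M \<and> T (cell x) = i \<longrightarrow> x \<le> k) \<and>
       \<not> (\<exists>d. 1 \<le> d \<and> d < M \<and> rw (d + 1) = rw d + 1 \<and> T (cell d) = i \<and> T (cell (d + 1)) = i + 1) \<and>
       T' = T(cell k := i + 1)"
    then obtain i k where ik: "1 \<le> i" "i \<le> N - 1" "1 \<le> k" "k \<le> M" "T (cell k) = i"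
      "\<forall>x. 1 \<le> x \<and> x \<le> M \<and> T (cell x) = i \<longrightarrow> x \<le> k"
      "\<not> (\<exists>d. 1 \<le> d \<and> d < M \<and> rw (d + 1) = rw d + 1 \<and> T (cell d) = i \<and> T (cell (d + 1)) = i + 1)"
      "T' = T(cell k := i + 1)" by blast
    have "i \<in> set (col_reading \<sigma> T)"
      using ik cell_in[of k] set_cs by (force simp: col_reading_cs)
    then have qd: "qk_defined i (col_reading \<sigma> T)"
      using ik(7) badpair[OF qrt, of i] ex_map_pair[of T "cs \<sigma>" "i+1" i]
      unfolding qk_defined_def col_reading_cs by blast
    have "col_reading \<sigma> T' = qk_f i (col_reading \<sigma> T)" using key[of k i] ik by blast
    then show "(T, T') \<in> Gamma_E N \<sigma>" using T T' ik qd unfolding Gamma_E_def by blast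
  qed
qed

end



context rib begin

lemma pi_Gamma:
  assumes Q: "Q \<in> Delta_V n M"
  shows "pi_sigma \<sigma> Q \<in> Gamma_V (n + length \<sigma> - 1) \<sigma>"
proof -
  have qa: "is_quasi_array M Q" and Qn: "Q (1, M) \<le> n" using Q by (auto simp: Delta_V_def)
  have rq: "\<And>c. c \<in> ribbon_cells \<sigma> \<Longrightarrow> c \<in> qa_cells M" using ribbon_qa by blast
  have piv: "\<And>c. c \<in> ribbon_cells \<sigma> \<Longrightarrow> pi_sigma \<sigma> Q c = Q c" by (simp add: pi_sigma_def)
  have "is_qrt \<sigma> (pi_sigma \<sigma> Q)"
    unfolding is_qrt_def
  proof (intro conjI allI ballI impI)
    fix c assume "c \<notin> ribbon_cells \<sigma>" then show "pi_sigma \<sigma> Q c = 0" by (simp add: pi_sigma_def)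
  next
    fix c assume "c \<in> ribbon_cells \<sigma>" then show "0 < pi_sigma \<sigma> Q c"
      using piv rq qaD(2)[OF qa] by simp
  next
    fix i j assume a: "(i, j) \<in> ribbon_cells \<sigma> \<and> (i, j + 1) \<in> ribbon_cells \<sigma>"
    then have c: "(i, j) \<in> qa_cells M" "(i, j + 1) \<in> qa_cells M" using rq by auto
    then have "Q (1, i + j - 1) \<le> Q (1, i + (j + 1) - 1)"
      by (intro qa_mono[OF qa]) (auto simp: qa_cells_def)
    then show "pi_sigma \<sigma> Q (i, j) \<le> pi_sigma \<sigma> Q (i, j + 1)"
      using a piv qaD(4)[OF qa c(1)] qaD(4)[OF qa c(2)] by simp
  next
    fix i j assume a: "(i, j) \<in> ribbon_cells \<sigma> \<and> (i + 1, j) \<in> ribbon_cells \<sigma>"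
    then have c: "(i, j) \<in> qa_cells M" "(i + 1, j) \<in> qa_cells M" using rq by auto
    then have "Q (1, i + j - 1) \<le> Q (1, i + 1 + j - 1)"
      by (intro qa_mono[OF qa]) (auto simp: qa_cells_def)
    then show "pi_sigma \<sigma> Q (i, j) < pi_sigma \<sigma> Q (i + 1, j)"
      using a piv qaD(4)[OF qa c(1)] qaD(4)[OF qa c(2)] c by (simp add: qa_cells_def) linarith
  qed
  moreover have "pi_sigma \<sigma> Q c \<le> n + length \<sigma> - 1" if c: "c \<in> ribbon_cells \<sigma>" for c
  proof -
    obtain i j where ij: "c = (i, j)" by fastforce
    have cq: "(i, j) \<in> qa_cells M" using rq c ij by simp
    have il: "i \<le> length \<sigma>" using c ij ribbon_iff by simp
    have "Q (1, i + j - 1) \<le> Q (1, M)" using cq by (intro qa_mono[OF qa]) (auto simp: qa_cells_def)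
    then show ?thesis using qaD(4)[OF qa cq] piv c ij Qn il cq by (simp add: qa_cells_def)
  qed
  ultimately show ?thesis by (simp add: Gamma_V_def)
qed

lemma bar_props:
  assumes T: "T \<in> Gamma_V (n + length \<sigma> - 1) \<sigma>" and M1: "1 \<le> M"
  defines "q \<equiv> \<lambda>k. T (cell k) - (rw k - 1)"
  shows "is_quasi_array M (arr M q)" "pi_sigma \<sigma> (arr M q) = T" "arr M q \<in> Delta_V n M"
    "qa_bar M \<sigma> T = arr M q"
proof -
  have qrt: "is_qrt \<sigma> T" and bnd: "\<And>c. c \<in> ribbon_cells \<sigma> \<Longrightarrow> T c \<le> n + length \<sigma> - 1"
    using T by (auto simp: Gamma_V_def)
  have ge: "\<And>k. 1 \<le> k \<Longrightarrow> k \<le> M \<Longrightarrow> rw k \<le> T (cell k)" using t_ge_rw[OF qrt] by blast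
  have pos: "0 < q k" if k: "1 \<le> k" "k \<le> M" for k
  proof -
    have "rw k \<le> T (cell k)" "1 \<le> rw k" using ge[OF k] rw_props[OF k] by auto
    then show ?thesis unfolding q_def by simp
  qed
  have mono: "q k \<le> q (k + 1)" if k: "1 \<le> k" "k < M" for k
    using t_step[OF qrt k] rw_step[OF k] ge[of k] ge[of "k+1"] k rw_props[of k] unfolding q_def by auto
  show qa: "is_quasi_array M (arr M q)" using arr_qa pos mono by blast
  show pi: "pi_sigma \<sigma> (arr M q) = T"
  proof (rule ext)
    fix c
    show "pi_sigma \<sigma> (arr M q) c = T c"
    proof (cases "c \<in> ribbon_cells \<sigma>")
      case True
      then obtain d where d: "1 \<le> d" "d \<le> M" "c = cell d" using ribbon_eq by auto
      have "arr M q (cell d) = q d + (rw d - 1)" using arr_cell d by simp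
      also have "\<dots> = T (cell d)" using ge[of d] d rw_props[of d] unfolding q_def by simp
      finally show ?thesis using True d by (simp add: pi_sigma_def)
    next
      case False then show ?thesis using qrt unfolding pi_sigma_def is_qrt_def by (cases c) auto
    qed
  qed
  have "q M \<le> n" using bnd[OF cell_in[of M]] M1 rw_M[OF M1] unfolding q_def by simp
  then show "arr M q \<in> Delta_V n M" using qa arr_1[of M M q] M1 by (simp add: Delta_V_def)
  show "qa_bar M \<sigma> T = arr M q" unfolding qa_bar_def
    by (rule the_equality) (use qa pi qa_unique in auto)
qed

lemma pi_D:
  assumes qa: "is_quasi_array M Q" and k: "1 \<le> k" "k \<le> M"
  shows "pi_sigma \<sigma> (qa_D M k Q) = (pi_sigma \<sigma> Q)(cell k := pi_sigma \<sigma> Q (cell k) + 1)"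
proof (rule ext)
  fix c
  define q where "q = (\<lambda>k. Q (1, k))"
  have Qe: "Q = arr M q" using qa_arr[OF qa] unfolding q_def .
  have De: "qa_D M k Q = arr M (q(k := q k + 1))" using Qe qa_D_arr by simp
  show "pi_sigma \<sigma> (qa_D M k Q) c = ((pi_sigma \<sigma> Q)(cell k := pi_sigma \<sigma> Q (cell k) + 1)) c"
  proof (cases "c \<in> ribbon_cells \<sigma>")
    case True
    then obtain d where d: "1 \<le> d" "d \<le> M" "c = cell d" using ribbon_eq by auto
    show ?thesis
    proof (cases "d = k")
      case True
      then show ?thesis using d De Qe arr_cell[of d] pi_cell[of d] by simp
    next
      case False
      then have "cell d \<noteq> cell k" using cell_inj[of d k] d k by auto
      then show ?thesis using d De Qe arr_cell[of d] pi_cell[of d] False by simp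
    qed
  next
    case False
    then have "c \<noteq> cell k" using cell_in k by auto
    then show ?thesis using False by (simp add: pi_sigma_def)
  qed
qed

end



context rib begin

lemma Delta_Gamma_E:
  assumes Q: "Q \<in> Delta_V n M" and Q': "Q' \<in> Delta_V n M" and M1: "1 \<le> M"
  shows "(Q, Q') \<in> Delta_E n M \<longleftrightarrow>
         (pi_sigma \<sigma> Q, pi_sigma \<sigma> Q') \<in> Gamma_E (n + length \<sigma> - 1) \<sigma>"
proof -
  define N where "N = n + length \<sigma> - 1"
  define T where "T = pi_sigma \<sigma> Q"
  define T' where "T' = pi_sigma \<sigma> Q'"
  have qa: "is_quasi_array M Q" using Q by (simp add: Delta_V_def)
  have qa': "is_quasi_array M Q'" using Q' by (simp add: Delta_V_def)
  have TG: "T \<in> Gamma_V N \<sigma>" using pi_Gamma[OF Q] unfolding T_def N_def .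
  have TG': "T' \<in> Gamma_V N \<sigma>" using pi_Gamma[OF Q'] unfolding T'_def N_def .
  have qrt: "is_qrt \<sigma> T" using TG by (simp add: Gamma_V_def)
  define q where "q = (\<lambda>k. Q (1, k))"
  have Tc: "\<And>d. 1 \<le> d \<Longrightarrow> d \<le> M \<Longrightarrow> T (cell d) = q d + (rw d - 1)"
    unfolding T_def q_def using pi_cell qa_cell[OF qa] by simp
  have ge: "\<And>k. 1 \<le> k \<Longrightarrow> k \<le> M \<Longrightarrow> rw k \<le> T (cell k)" using t_ge_rw[OF qrt] by blast
  have E: "(Q, Q') \<in> Delta_E n M \<longleftrightarrow> (\<exists>k. 1 \<le> k \<and> k \<le> M \<and> qa_D_defined M k Q \<and> Q' = qa_D M k Q)"
    using Q Q' unfolding Delta_E_def by blast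
  have G: "(T, T') \<in> Gamma_E N \<sigma> \<longleftrightarrow>
    (\<exists>i k. 1 \<le> i \<and> i \<le> N - 1 \<and> 1 \<le> k \<and> k \<le> M \<and> T (cell k) = i \<and>
       (\<forall>x. 1 \<le> x \<and> x \<le> M \<and> T (cell x) = i \<longrightarrow> x \<le> k) \<and>
       \<not> (\<exists>d. 1 \<le> d \<and> d < M \<and> rw (d + 1) = rw d + 1 \<and> T (cell d) = i \<and> T (cell (d + 1)) = i + 1) \<and>
       T' = T(cell k := i + 1))"
    by (rule Gamma_E_iff[OF TG TG'])
  have "(\<exists>k. 1 \<le> k \<and> k \<le> M \<and> qa_D_defined M k Q \<and> Q' = qa_D M k Q) \<longleftrightarrow> (T, T') \<in> Gamma_E N \<sigma>"
  proof
    assume "\<exists>k. 1 \<le> k \<and> k \<le> M \<and> qa_D_defined M k Q \<and> Q' = qa_D M k Q"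
    then obtain k where k: "1 \<le> k" "k \<le> M" "qa_D_defined M k Q" "Q' = qa_D M k Q" by blast
    define i where "i = T (cell k)"
    have T'e: "T' = T(cell k := i + 1)" unfolding T'_def T_def i_def k(4) using pi_D[OF qa k(1,2)] .
    have i1: "1 \<le> i" using ge[OF k(1,2)] rw_props[OF k(1,2)] unfolding i_def by simp
    have "T' (cell k) \<le> N" using TG' cell_in[OF k(1,2)] by (simp add: Gamma_V_def)
    then have iN: "i \<le> N - 1" using T'e by simp
    have after: "i < T (cell x)" if x: "k < x" "x \<le> M" for x
    proof -
      have "q k < q (k + 1)" using k(3) x unfolding qa_D_defined_def q_def by auto
      moreover have "rw k \<le> rw (k + 1)" using rw_mono[of k "k+1"] k x by simp
      ultimately have "i < T (cell (k + 1))" using Tc[of k] Tc[of "k+1"] k x rw_props[of k] unfolding i_def by simp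
      also have "\<dots> \<le> T (cell x)" using t_mono[OF qrt, of "k+1" x] x by simp
      finally show ?thesis .
    qed
    have last: "\<forall>x. 1 \<le> x \<and> x \<le> M \<and> T (cell x) = i \<longrightarrow> x \<le> k"
      using after by (metis less_irrefl not_le)
    have nb: "\<not> (\<exists>d. 1 \<le> d \<and> d < M \<and> rw (d + 1) = rw d + 1 \<and> T (cell d) = i \<and> T (cell (d + 1)) = i + 1)"
    proof
      assume "\<exists>d. 1 \<le> d \<and> d < M \<and> rw (d + 1) = rw d + 1 \<and> T (cell d) = i \<and> T (cell (d + 1)) = i + 1"
      then obtain d where d: "1 \<le> d" "d < M" "rw (d + 1) = rw d + 1" "T (cell d) = i" "T (cell (d + 1)) = i + 1"
        by blast
      have dk: "d \<le> k" using last d by simp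
      have "\<not> d + 1 \<le> k"
      proof
        assume "d + 1 \<le> k"
        then have "T (cell (d + 1)) \<le> T (cell k)" using t_mono[OF qrt, of "d+1" k] k by simp
        then show False using d unfolding i_def by simp
      qed
      then have dk': "d = k" using dk by simp
      have "q (k + 1) = q k" using Tc[of d] Tc[of "d+1"] d dk' rw_props[of d] by simp
      moreover have "q k < q (k + 1)" using k(3) d dk' unfolding qa_D_defined_def q_def by auto
      ultimately show False by simp
    qed
    show "(T, T') \<in> Gamma_E N \<sigma>" unfolding G using i1 iN k(1,2) last nb T'e unfolding i_def by blast
  next
    assume "(T, T') \<in> Gamma_E N \<sigma>"
    then obtain i k where ik: "1 \<le> i" "i \<le> N - 1" "1 \<le> k" "k \<le> M" "T (cell k) = i"
      "\<forall>x. 1 \<le> x \<and> x \<le> M \<and> T (cell x) = i \<longrightarrow> x \<le> k"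
      "\<not> (\<exists>d. 1 \<le> d \<and> d < M \<and> rw (d + 1) = rw d + 1 \<and> T (cell d) = i \<and> T (cell (d + 1)) = i + 1)"
      "T' = T(cell k := i + 1)" unfolding G by blast
    have strict: "q k < q (k + 1)" if kM: "k < M"
    proof -
      have "T (cell k) \<le> T (cell (k + 1))" using t_mono[OF qrt, of k "k+1"] ik kM by simp
      moreover have "T (cell (k + 1)) \<noteq> i"
      proof
        assume h: "T (cell (k + 1)) = i"
        have "k + 1 \<le> k" using ik(6)[rule_format, of "k+1"] h kM by simp
        then show False by simp
      qed
      ultimately have gt: "i < T (cell (k + 1))" using ik by simp
      have qm: "q k \<le> q (k + 1)" using qaD(3)[OF qa, of k] ik kM unfolding q_def by simp
      from rw_step[OF ik(3) kM] show ?thesis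
      proof
        assume "rw (k + 1) = rw k"
        then show ?thesis using gt Tc[of k] Tc[of "k+1"] ik kM by simp
      next
        assume r: "rw (k + 1) = rw k + 1"
        show ?thesis
        proof (rule ccontr)
          assume "\<not> q k < q (k + 1)"
          then have "q (k + 1) = q k" using qm by simp
          then have "T (cell (k + 1)) = i + 1" using Tc[of k] Tc[of "k+1"] ik kM r rw_props[of k] by simp
          then show False using ik(7) ik(3,5) kM r by blast
        qed
      qed
    qed
    have def: "qa_D_defined M k Q" using strict ik(3,4) unfolding qa_D_defined_def q_def by fastforce
    have Qe: "Q = arr M q" using qa_arr[OF qa] unfolding q_def .
    have De: "qa_D M k Q = arr M (q(k := q k + 1))" using Qe qa_D_arr by simp
    have qpos: "\<And>j. 1 \<le> j \<Longrightarrow> j \<le> M \<Longrightarrow> 0 < q j" using qa_pos1[OF qa] unfolding q_def by blast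
    have qmono: "\<And>j. 1 \<le> j \<Longrightarrow> j < M \<Longrightarrow> q j \<le> q (j + 1)" using qaD(3)[OF qa] unfolding q_def by blast
    have qaD': "is_quasi_array M (qa_D M k Q)" unfolding De
    proof (rule arr_qa)
      fix j assume "1 \<le> j" "j \<le> M" then show "0 < (q(k := q k + 1)) j" using qpos by simp
    next
      fix j assume j: "1 \<le> j" "j < M"
      show "(q(k := q k + 1)) j \<le> (q(k := q k + 1)) (j + 1)"
        using qmono[OF j] strict j by auto
    qed
    have "pi_sigma \<sigma> (qa_D M k Q) = pi_sigma \<sigma> Q'"
      using pi_D[OF qa ik(3,4)] ik(5,8) unfolding T_def T'_def by simp
    then have "qa_D M k Q = Q'" using qa_unique[OF qaD' qa'] by simp
    then show "\<exists>k. 1 \<le> k \<and> k \<le> M \<and> qa_D_defined M k Q \<and> Q' = qa_D M k Q"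
      using ik(3,4) def by blast
  qed
  then show ?thesis using E unfolding T_def T'_def N_def by simp
qed

end

theorem theorem4p5:
  fixes n m :: nat and \<sigma> :: "nat list"
  assumes "0 < n" and "0 < m"
    and "\<forall>x \<in> set \<sigma>. 0 < x" and "sum_list \<sigma> = m"
  defines "N \<equiv> n + length \<sigma> - 1"
  shows "(\<forall>Q \<in> Delta_V n m. pi_sigma \<sigma> Q \<in> Gamma_V N \<sigma>) \<and>
         (\<forall>T \<in> Gamma_V N \<sigma>. qa_bar m \<sigma> T \<in> Delta_V n m) \<and>
         (\<forall>Q \<in> Delta_V n m. qa_bar m \<sigma> (pi_sigma \<sigma> Q) = Q) \<and>
         (\<forall>T \<in> Gamma_V N \<sigma>. pi_sigma \<sigma> (qa_bar m \<sigma> T) = T) \<and>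
         (\<forall>Q \<in> Delta_V n m. \<forall>Q' \<in> Delta_V n m.
            (Q, Q') \<in> Delta_E n m \<longleftrightarrow> (pi_sigma \<sigma> Q, pi_sigma \<sigma> Q') \<in> Gamma_E N \<sigma>) \<and>
         (\<forall>T \<in> Gamma_V N \<sigma>. \<forall>T' \<in> Gamma_V N \<sigma>.
            (T, T') \<in> Gamma_E N \<sigma> \<longleftrightarrow> (qa_bar m \<sigma> T, qa_bar m \<sigma> T') \<in> Delta_E n m)"
proof -
  interpret rib \<sigma> using assms(3) by unfold_locales
  have M1: "1 \<le> sum_list \<sigma>" using assms(2,4) by simp
  have m: "m = sum_list \<sigma>" using assms(4) by simp
  have p1: "\<forall>Q \<in> Delta_V n m. pi_sigma \<sigma> Q \<in> Gamma_V N \<sigma>" using pi_Gamma unfolding N_def m by blast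
  have p2: "\<forall>T \<in> Gamma_V N \<sigma>. qa_bar m \<sigma> T \<in> Delta_V n m" using bar_props[OF _ M1] unfolding N_def m by metis
  have p3: "\<forall>Q \<in> Delta_V n m. qa_bar m \<sigma> (pi_sigma \<sigma> Q) = Q"
  proof
    fix Q assume Q: "Q \<in> Delta_V n m"
    then have qa: "is_quasi_array m Q" by (simp add: Delta_V_def)
    show "qa_bar m \<sigma> (pi_sigma \<sigma> Q) = Q" unfolding qa_bar_def
      by (rule the_equality) (use qa qa_unique in \<open>auto simp: m\<close>)
  qed
  have p4: "\<forall>T \<in> Gamma_V N \<sigma>. pi_sigma \<sigma> (qa_bar m \<sigma> T) = T" using bar_props[OF _ M1] unfolding N_def m by metis
  have p5: "\<forall>Q \<in> Delta_V n m. \<forall>Q' \<in> Delta_V n m.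
            (Q, Q') \<in> Delta_E n m \<longleftrightarrow> (pi_sigma \<sigma> Q, pi_sigma \<sigma> Q') \<in> Gamma_E N \<sigma>"
    using Delta_Gamma_E[OF _ _ M1] unfolding N_def m by blast
  have p6: "\<forall>T \<in> Gamma_V N \<sigma>. \<forall>T' \<in> Gamma_V N \<sigma>.
            (T, T') \<in> Gamma_E N \<sigma> \<longleftrightarrow> (qa_bar m \<sigma> T, qa_bar m \<sigma> T') \<in> Delta_E n m"
  proof (intro ballI)
    fix T T' assume T: "T \<in> Gamma_V N \<sigma>" and T': "T' \<in> Gamma_V N \<sigma>"
    have "(qa_bar m \<sigma> T, qa_bar m \<sigma> T') \<in> Delta_E n m \<longleftrightarrow>
      (pi_sigma \<sigma> (qa_bar m \<sigma> T), pi_sigma \<sigma> (qa_bar m \<sigma> T')) \<in> Gamma_E N \<sigma>"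
      using p5 p2 T T' by blast
    then show "(T, T') \<in> Gamma_E N \<sigma> \<longleftrightarrow> (qa_bar m \<sigma> T, qa_bar m \<sigma> T') \<in> Delta_E n m"
      using p4 T T' by simp
  qed
  show ?thesis using p1 p2 p3 p4 p5 p6 by blast
qed


end
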